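(* Let $N\ge2$, $l\ge2$, $\sigma\in\mathfrak S_{N,l}$, let $J\in\{1,\dots,N\}^k$ be nonperiodic and let $f\in\mathrm{BFS}_N(\Lambda)$ be $P(J)$. Let $Q_J=[p_1]\sqcup\cdots\sqcup[p_M]$ be the orbit decomposition of $Q_J$. Then $\Lambda=\Lambda(p_1)\sqcup\cdots\sqcup\Lambda(p_M)$ (disjoint union) and $f^{(\sigma)}=f^{[1]}\oplus\cdots\oplus f^{[M]}$ as branching function systems, where $f^{[i]}=f^{(\sigma)}|_{\Lambda(p_i)}$.
   Context: Branching function systems: for an infinite set $\Lambda$, $f=\{f_i\}_{i=1}^N\in\mathrm{BFS}_N(\Lambda)$ means each $f_i$ is injective on $\Lambda$ and $f_1(\Lambda),\dots,f_N(\Lambda)$ partition $\Lambda$. $f_J=f_{j_1}\circ\cdots\circ f_{j_k}$, $f_0=\mathrm{id}$. $x\sim y$ iff $f_{J_1}(z)=x$, $f_{J_2}(z)=y$ for some words $J_1,J_2$ (possibly empty) and $z$; $A_f(x)=\{y:x\sim y\}$; $f$ is cyclic if $\Lambda=A_f(x)$ for some $x$; $f$ is $P(J)$ ($J=(j_1,\dots,j_k)$) if $f$ is cyclic and there are distinct $n_1,\dots,n_k$ with $f_{j_1}(n_1)=n_k$, $f_{j_2}(n_2)=n_1,\dots,f_{j_k}(n_k)=n_{k-1}$. The direct sum $f=\bigoplus_\omega f^{[\omega]}$ means $\Lambda=\coprod_\omega\Lambda_\omega$, each $\Lambda_\omega$ invariant under all $f_i$, and $f^{[\omega]}=f|_{\Lambda_\omega}\in\mathrm{BFS}_N(\Lambda_\omega)$.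 For $\sigma\in\mathfrak S_{N,l}$ (permutations of $\{1,\dots,N\}^l$), $f^{(\sigma)}_i(f_K(n))=f_{\sigma(i,K)}(n)$ for $K\in\{1,\dots,N\}^{l-1}$. $J$ nonperiodic: not an $r$-fold concatenation of a word with $r\ge2$. Semi-Mealy machine by $\sigma$: states $q_K$ ($K\in\{1,\dots,N\}^{l-1}$), inputs $a_i$; with $\sigma^{-1}(K,i)=(y_1,\dots,y_l)$, $\delta(q_K,a_i)=q_{(y_2,\dots,y_l)}$, extended by $\delta(q,wa)=\delta(\delta(q,w),a)$; $a_J=a_{j_1}\cdots a_{j_k}$. $Q_J=\{q:\delta(q,(a_J)^n)=q$ for some $n\ge1\}$, $q\sim q'$ iff $\delta(q,(a_J)^n)=q'$ for some $n\ge1$, $[q]$ its class. Definition of $\Lambda(p)$: let $n_0$ be the unique point with $f_J(n_0)=n_0$. For $p\in Q_J$ let $r=\#[p]$, $\alpha=rk$, extend $J$ periodically ($j_{k(c-1)+i}=j_i$), set $p_1=p$, $p_i=\delta(p_{i-1},a_{j_{i-1}})$ ($2\le i\le\alpha$), write $p_\alpha=q_{I_\alpha}$, let $m(p)=f_{(I_\alpha,j_\alpha)}(n_0)$ and $\Lambda(p)=A_{f^{(\sigma)}}(m(p))$. *)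

theory Defs
  imports Main
begin

definition words :: "nat \<Rightarrow> nat \<Rightarrow> nat list set" where
  "words N n = {w. length w = n \<and> set w \<subseteq> {1..N}}"

fun fw :: "(nat \<Rightarrow> 'a \<Rightarrow> 'a) \<Rightarrow> nat list \<Rightarrow> 'a \<Rightarrow> 'a" where
  "fw f [] = id"
| "fw f (j # J) = f j \<circ> fw f J"

definition BFS :: "nat \<Rightarrow> 'a set \<Rightarrow> (nat \<Rightarrow> 'a \<Rightarrow> 'a) \<Rightarrow> bool" where
  "BFS N L f \<longleftrightarrow> infinite L
     \<and> (\<forall>i\<in>{1..N}. inj_on (f i) L \<and> f i ` L \<subseteq> L)
     \<and> (\<forall>i\<in>{1..N}. \<forall>j\<in>{1..N}. i \<noteq> j \<longrightarrow> f i ` L \<inter> f j ` L = {})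
     \<and> (\<Union>i\<in>{1..N}. f i ` L) = L"

definition equiv_bfs :: "nat \<Rightarrow> 'a set \<Rightarrow> (nat \<Rightarrow> 'a \<Rightarrow> 'a) \<Rightarrow> 'a \<Rightarrow> 'a \<Rightarrow> bool" where
  "equiv_bfs N L f x y \<longleftrightarrow> (\<exists>z\<in>L. \<exists>J1 J2. set J1 \<subseteq> {1..N} \<and> set J2 \<subseteq> {1..N}
       \<and> fw f J1 z = x \<and> fw f J2 z = y)"

definition Aset :: "nat \<Rightarrow> 'a set \<Rightarrow> (nat \<Rightarrow> 'a \<Rightarrow> 'a) \<Rightarrow> 'a \<Rightarrow> 'a set" where
  "Aset N L f x = {y \<in> L. equiv_bfs N L f x y}"

definition cyclic :: "nat \<Rightarrow> 'a set \<Rightarrow> (nat \<Rightarrow> 'a \<Rightarrow> 'a) \<Rightarrow> bool" where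
  "cyclic N L f \<longleftrightarrow> (\<exists>x\<in>L. L = Aset N L f x)"

text \<open>f is P(J), J = [j_1,...,j_k]: j_i = J ! (i-1).\<close>
definition isP :: "nat \<Rightarrow> 'a set \<Rightarrow> (nat \<Rightarrow> 'a \<Rightarrow> 'a) \<Rightarrow> nat list \<Rightarrow> bool" where
  "isP N L f J \<longleftrightarrow> cyclic N L f \<and>
     (\<exists>n :: nat \<Rightarrow> 'a. inj_on n {1..length J} \<and> n ` {1..length J} \<subseteq> L
        \<and> f (J ! 0) (n 1) = n (length J)
        \<and> (\<forall>i\<in>{2..length J}. f (J ! (i - 1)) (n i) = n (i - 1)))"

definition nonperiodic :: "nat list \<Rightarrow> bool" where
  "nonperiodic J \<longleftrightarrow> \<not> (\<exists>w r. r \<ge> 2 \<and> J = concat (replicate r w))"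

definition perm_words :: "nat \<Rightarrow> nat \<Rightarrow> (nat list \<Rightarrow> nat list) \<Rightarrow> bool" where
  "perm_words N l \<sigma> \<longleftrightarrow> bij_betw \<sigma> (words N l) (words N l)"

definition fsig :: "nat \<Rightarrow> 'a set \<Rightarrow> (nat \<Rightarrow> 'a \<Rightarrow> 'a) \<Rightarrow> nat \<Rightarrow> (nat list \<Rightarrow> nat list)
                      \<Rightarrow> nat \<Rightarrow> 'a \<Rightarrow> 'a" where
  "fsig N L f l \<sigma> i x = (THE y. \<exists>K n. K \<in> words N (l - 1) \<and> n \<in> L \<and> x = fw f K n
                                  \<and> y = fw f (\<sigma> (i # K)) n)"

text \<open>Semi-Mealy machine: state q_K is represented by K.
  delta(q_K, a_i) = q_(y2..yl) where sigma^-1(K,i) = (y1,...,yl).\<close>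
definition delta :: "nat \<Rightarrow> nat \<Rightarrow> (nat list \<Rightarrow> nat list) \<Rightarrow> nat list \<Rightarrow> nat \<Rightarrow> nat list" where
  "delta N l \<sigma> K i = tl (inv_into (words N l) \<sigma> (K @ [i]))"

definition deltaw :: "nat \<Rightarrow> nat \<Rightarrow> (nat list \<Rightarrow> nat list) \<Rightarrow> nat list \<Rightarrow> nat list \<Rightarrow> nat list" where
  "deltaw N l \<sigma> K w = foldl (delta N l \<sigma>) K w"

definition QJ :: "nat \<Rightarrow> nat \<Rightarrow> (nat list \<Rightarrow> nat list) \<Rightarrow> nat list \<Rightarrow> nat list set" where
  "QJ N l \<sigma> J = {q \<in> words N (l - 1). \<exists>n\<ge>1. deltaw N l \<sigma> q (concat (replicate n J)) = q}"

definition qclass :: "nat \<Rightarrow> nat \<Rightarrow> (nat list \<Rightarrow> nat list) \<Rightarrow> nat list \<Rightarrow> nat list \<Rightarrow> nat list set" where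
  "qclass N l \<sigma> J q = {q'. \<exists>n\<ge>1. deltaw N l \<sigma> q (concat (replicate n J)) = q'}"

fun pseq :: "nat \<Rightarrow> nat \<Rightarrow> (nat list \<Rightarrow> nat list) \<Rightarrow> nat list \<Rightarrow> nat list \<Rightarrow> nat \<Rightarrow> nat list" where
  "pseq N l \<sigma> J p 0 = p"
| "pseq N l \<sigma> J p (Suc 0) = p"
| "pseq N l \<sigma> J p (Suc (Suc i)) =
     delta N l \<sigma> (pseq N l \<sigma> J p (Suc i)) (J ! (i mod length J))"

definition Jext :: "nat list \<Rightarrow> nat \<Rightarrow> nat" where
  "Jext J i = J ! ((i - 1) mod length J)"

definition mpt :: "nat \<Rightarrow> 'a set \<Rightarrow> (nat \<Rightarrow> 'a \<Rightarrow> 'a) \<Rightarrow> nat \<Rightarrow> (nat list \<Rightarrow> nat list)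
                     \<Rightarrow> nat list \<Rightarrow> nat list \<Rightarrow> 'a" where
  "mpt N L f l \<sigma> J p =
     (let n0 = (THE n. n \<in> L \<and> fw f J n = n);
          \<alpha> = card (qclass N l \<sigma> J p) * length J
      in fw f (pseq N l \<sigma> J p \<alpha> @ [Jext J \<alpha>]) n0)"

definition Lam :: "nat \<Rightarrow> 'a set \<Rightarrow> (nat \<Rightarrow> 'a \<Rightarrow> 'a) \<Rightarrow> nat \<Rightarrow> (nat list \<Rightarrow> nat list)
                     \<Rightarrow> nat list \<Rightarrow> nat list \<Rightarrow> 'a set" where
  "Lam N L f l \<sigma> J p = Aset N L (fsig N L f l \<sigma>) (mpt N L f l \<sigma> J p)"

definition direct_sum :: "nat \<Rightarrow> 'a set \<Rightarrow> (nat \<Rightarrow> 'a \<Rightarrow> 'a) \<Rightarrow> 'b set \<Rightarrow> ('b \<Rightarrow> 'a set) \<Rightarrow> bool" where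
  "direct_sum N L g I Ls \<longleftrightarrow> L = (\<Union>\<omega>\<in>I. Ls \<omega>)
     \<and> (\<forall>\<omega>\<in>I. \<forall>\<omega>'\<in>I. \<omega> \<noteq> \<omega>' \<longrightarrow> Ls \<omega> \<inter> Ls \<omega>' = {})
     \<and> (\<forall>\<omega>\<in>I. \<forall>i\<in>{1..N}. g i ` Ls \<omega> \<subseteq> Ls \<omega>)
     \<and> (\<forall>\<omega>\<in>I. BFS N (Ls \<omega>) g)"

end

theory Submission
  imports Defs
begin


lemma fw_append: "fw f (A @ B) = fw f A \<circ> fw f B"
  by (induction A) auto

lemma fw_append_app: "fw f (A @ B) x = fw f A (fw f B x)"
  by (simp add: fw_append)

locale bfsl =
  fixes N :: nat and L :: "'a set" and g :: "nat \<Rightarrow> 'a \<Rightarrow> 'a"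
  assumes bfs: "BFS N L g"
begin

lemma inj: "i \<in> {1..N} \<Longrightarrow> inj_on (g i) L" using bfs by (simp add: BFS_def)
lemma maps: "i \<in> {1..N} \<Longrightarrow> x \<in> L \<Longrightarrow> g i x \<in> L" using bfs unfolding BFS_def by blast
lemma disj: "i \<in> {1..N} \<Longrightarrow> j \<in> {1..N} \<Longrightarrow> x \<in> L \<Longrightarrow> y \<in> L \<Longrightarrow> g i x = g j y \<Longrightarrow> i = j"
  using bfs unfolding BFS_def by blast
lemma cover: "x \<in> L \<Longrightarrow> \<exists>i\<in>{1..N}. \<exists>y\<in>L. x = g i y"
  using bfs unfolding BFS_def by blast
lemma infL: "infinite L" using bfs by (simp add: BFS_def)

lemma fw_in: "set U \<subseteq> {1..N} \<Longrightarrow> x \<in> L \<Longrightarrow> fw g U x \<in> L"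
  by (induction U) (auto intro: maps)

lemma fw_uniq: "set U \<subseteq> {1..N} \<Longrightarrow> set V \<subseteq> {1..N} \<Longrightarrow> length U = length V \<Longrightarrow> x \<in> L \<Longrightarrow> y \<in> L
   \<Longrightarrow> fw g U x = fw g V y \<Longrightarrow> U = V \<and> x = y"
proof (induction U arbitrary: V)
  case Nil then show ?case by simp
next
  case (Cons a U)
  then obtain b V' where V: "V = b # V'" by (cases V) auto
  have a: "a \<in> {1..N}" "b \<in> {1..N}" using Cons V by auto
  have in1: "fw g U x \<in> L" using Cons fw_in by auto
  have in2: "fw g V' y \<in> L" using Cons V fw_in by auto
  have eq: "g a (fw g U x) = g b (fw g V' y)" using Cons V by simp
  have ab: "a = b" using disj[OF a in1 in2 eq] .
  hence "fw g U x = fw g V' y" using eq inj[OF a(1)] in1 in2 by (auto dest: inj_onD)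
  then show ?case using Cons.IH[of V'] Cons.prems V ab by auto
qed

lemma fw_prefix:
  assumes "set U \<subseteq> {1..N}" "set V \<subseteq> {1..N}" "length U \<le> length V" "x \<in> L" "y \<in> L"
    "fw g U x = fw g V y"
  shows "U = take (length U) V \<and> x = fw g (drop (length U) V) y"
proof -
  have "V = take (length U) V @ drop (length U) V" by simp
  hence e: "fw g V y = fw g (take (length U) V) (fw g (drop (length U) V) y)"
    by (metis fw_append_app)
  have s: "set (take (length U) V) \<subseteq> {1..N}" "set (drop (length U) V) \<subseteq> {1..N}"
    using assms(2) by (meson order_trans set_take_subset set_drop_subset)+
  show ?thesis
    using fw_uniq[OF assms(1) s(1) _ assms(4) fw_in[OF s(2) assms(5)]] assms(3,6) e by auto
qed

lemma ancestors: "x \<in> L \<Longrightarrow> \<exists>U y. length U = n \<and> set U \<subseteq> {1..N} \<and> y \<in> L \<and> x = fw g U y"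
proof (induction n)
  case 0 then show ?case by (intro exI[of _ "[]"] exI[of _ x]) simp
next
  case (Suc n)
  then obtain U y where U: "length U = n" "set U \<subseteq> {1..N}" "y \<in> L" "x = fw g U y" by blast
  obtain i y' where "i \<in> {1..N}" "y' \<in> L" "y = g i y'" using cover[OF U(3)] by blast
  then show ?case using U by (intro exI[of _ "U @ [i]"] exI[of _ y']) (auto simp: fw_append)
qed

lemma eq_refl: "x \<in> L \<Longrightarrow> equiv_bfs N L g x x"
  unfolding equiv_bfs_def by (intro bexI[of _ x] exI[of _ "[]"]) auto

lemma eq_sym: "equiv_bfs N L g x y \<Longrightarrow> equiv_bfs N L g y x"
  unfolding equiv_bfs_def by blast

lemma eq_desc: "z \<in> L \<Longrightarrow> set U \<subseteq> {1..N} \<Longrightarrow> equiv_bfs N L g (fw g U z) z"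
  unfolding equiv_bfs_def by (intro bexI[of _ z] exI[of _ U] exI[of _ "[]"]) auto

lemma eq_trans:
  assumes "equiv_bfs N L g x y" "equiv_bfs N L g y w"
  shows "equiv_bfs N L g x w"
proof -
  obtain z A B where z: "z \<in> L" "set A \<subseteq> {1..N}" "set B \<subseteq> {1..N}" "fw g A z = x" "fw g B z = y"
    using assms(1) unfolding equiv_bfs_def by blast
  obtain z' C D where z': "z' \<in> L" "set C \<subseteq> {1..N}" "set D \<subseteq> {1..N}" "fw g C z' = y" "fw g D z' = w"
    using assms(2) unfolding equiv_bfs_def by blast
  show ?thesis
  proof (cases "length B \<le> length C")
    case True
    then have "z = fw g (drop (length B) C) z'"
      using fw_prefix[OF z(3) z'(2) True z(1) z'(1)] z(5) z'(4) by auto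
    moreover have "set (drop (length B) C) \<subseteq> {1..N}" using z'(2) by (meson order_trans set_drop_subset)
    ultimately show ?thesis unfolding equiv_bfs_def using z z'
      by (intro bexI[of _ z'] exI[of _ "A @ drop (length B) C"] exI[of _ D]) (auto simp: fw_append)
  next
    case False
    then have "z' = fw g (drop (length C) B) z"
      using fw_prefix[OF z'(2) z(3) _ z'(1) z(1)] z(5) z'(4) by auto
    moreover have "set (drop (length C) B) \<subseteq> {1..N}" using z(3) by (meson order_trans set_drop_subset)
    ultimately show ?thesis unfolding equiv_bfs_def using z z'
      by (intro bexI[of _ z] exI[of _ A] exI[of _ "D @ drop (length C) B"]) (auto simp: fw_append)
  qed
qed

lemma Aset_sub: "Aset N L g x \<subseteq> L" unfolding Aset_def by auto

lemma Aset_inv: "y \<in> Aset N L g x \<Longrightarrow> i \<in> {1..N} \<Longrightarrow> g i y \<in> Aset N L g x"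
proof -
  assume y: "y \<in> Aset N L g x" and i: "i \<in> {1..N}"
  then have yL: "y \<in> L" and e: "equiv_bfs N L g x y" unfolding Aset_def by auto
  have "equiv_bfs N L g y (g i y)" using eq_sym[OF eq_desc[OF yL, of "[i]"]] i by simp
  then show ?thesis using eq_trans[OF e] maps[OF i yL] unfolding Aset_def by auto
qed

lemma Aset_BFS:
  assumes N2: "N \<ge> 2" and x: "x \<in> L"
  shows "BFS N (Aset N L g x) g"
proof -
  let ?C = "Aset N L g x"
  have xC: "x \<in> ?C" using x eq_refl unfolding Aset_def by auto
  have inj': "\<forall>i\<in>{1..N}. inj_on (g i) ?C \<and> g i ` ?C \<subseteq> ?C"
    using inj Aset_sub Aset_inv by (meson image_subsetI inj_on_subset)
  have dis: "\<forall>i\<in>{1..N}. \<forall>j\<in>{1..N}. i \<noteq> j \<longrightarrow> g i ` ?C \<inter> g j ` ?C = {}"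
    using disj Aset_sub by blast
  have cov: "(\<Union>i\<in>{1..N}. g i ` ?C) = ?C"
  proof
    show "(\<Union>i\<in>{1..N}. g i ` ?C) \<subseteq> ?C" using Aset_inv by blast
  next
    show "?C \<subseteq> (\<Union>i\<in>{1..N}. g i ` ?C)"
    proof
      fix y assume y: "y \<in> ?C"
      then have yL: "y \<in> L" and e: "equiv_bfs N L g x y" unfolding Aset_def by auto
      obtain i y' where i: "i \<in> {1..N}" "y' \<in> L" "y = g i y'" using cover[OF yL] by blast
      have "equiv_bfs N L g y y'" using eq_desc[OF i(2), of "[i]"] i by simp
      then have "y' \<in> ?C" using eq_trans[OF e] i unfolding Aset_def by auto
      then show "y \<in> (\<Union>i\<in>{1..N}. g i ` ?C)" using i by blast
    qed
  qed
  have infC: "infinite ?C"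
  proof
    assume fin: "finite ?C"
    have i12: "1 \<in> {1..N}" "2 \<in> {1..N}" using N2 by auto
    have c1: "card (g 1 ` ?C) = card ?C" using inj'[rule_format, OF i12(1)] card_image by blast
    have c2: "card (g 2 ` ?C) = card ?C" using inj'[rule_format, OF i12(2)] card_image by blast
    have d: "g 1 ` ?C \<inter> g 2 ` ?C = {}" using dis i12 by auto
    have sub: "g 1 ` ?C \<union> g 2 ` ?C \<subseteq> ?C" using inj' i12 by blast
    have "card (g 1 ` ?C \<union> g 2 ` ?C) = card (g 1 ` ?C) + card (g 2 ` ?C)"
      using d fin by (intro card_Un_disjoint) auto
    moreover have "card (g 1 ` ?C \<union> g 2 ` ?C) \<le> card ?C" using card_mono[OF fin sub] .
    ultimately have "card ?C = 0" using c1 c2 by simp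
    then show False using fin xC by auto
  qed
  show ?thesis unfolding BFS_def using infC inj' dis cov by blast
qed

end


lemma words_iff: "w \<in> words N n \<longleftrightarrow> length w = n \<and> set w \<subseteq> {1..N}"
  by (simp add: words_def)

abbreviation JJ :: "nat list \<Rightarrow> nat \<Rightarrow> nat list" where "JJ J n \<equiv> concat (replicate n J)"

lemma JJ_Suc: "JJ J (Suc n) = JJ J n @ J"
  by (metis concat.simps(2) concat_append concat.simps(1) append_Nil2 replicate_append_same replicate_Suc)

lemma JJ_len: "length (JJ J n) = n * length J"
  by (induction n) (auto simp: JJ_Suc)

lemma JJ_set: "set J \<subseteq> A \<Longrightarrow> set (JJ J n) \<subseteq> A"
  by (induction n) (auto simp: JJ_Suc)

locale mainl =
  fixes N l :: nat and \<sigma> :: "nat list \<Rightarrow> nat list" and J :: "nat list"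
    and L :: "'a set" and f :: "nat \<Rightarrow> 'a \<Rightarrow> 'a"
  assumes N2: "N \<ge> 2" and l2: "l \<ge> 2" and perm: "perm_words N l \<sigma>"
    and Jne: "J \<noteq> []" and JN: "set J \<subseteq> {1..N}" and np: "nonperiodic J"
    and bfs: "BFS N L f" and isp: "isP N L f J"
begin

sublocale F: bfsl N L f by unfold_locales (rule bfs)

abbreviation "fs \<equiv> fsig N L f l \<sigma>"

lemma bij: "bij_betw \<sigma> (words N l) (words N l)" using perm by (simp add: perm_words_def)

lemma cons_words: "i \<in> {1..N} \<Longrightarrow> K \<in> words N (l-1) \<Longrightarrow> i # K \<in> words N l"
  using l2 by (auto simp: words_iff)

lemma sig_in: "i \<in> {1..N} \<Longrightarrow> K \<in> words N (l-1) \<Longrightarrow> \<sigma> (i # K) \<in> words N l"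
  using bij cons_words bij_betwE by blast

lemma rep: "x \<in> L \<Longrightarrow> \<exists>K n. K \<in> words N (l-1) \<and> n \<in> L \<and> x = fw f K n"
  using F.ancestors[of x "l-1"] by (auto simp: words_iff)

lemma rep_uniq: "K \<in> words N (l-1) \<Longrightarrow> K' \<in> words N (l-1) \<Longrightarrow> n \<in> L \<Longrightarrow> n' \<in> L
  \<Longrightarrow> fw f K n = fw f K' n' \<Longrightarrow> K = K' \<and> n = n'"
  using F.fw_uniq by (auto simp: words_iff)

lemma fsig_eq: "K \<in> words N (l-1) \<Longrightarrow> n \<in> L \<Longrightarrow> fs i (fw f K n) = fw f (\<sigma> (i # K)) n"
  unfolding fsig_def
proof (rule the_equality)
  assume "K \<in> words N (l-1)" "n \<in> L"
  then show "\<exists>K' n'. K' \<in> words N (l - 1) \<and> n' \<in> L \<and> fw f K n = fw f K' n' \<and> fw f (\<sigma> (i # K)) n = fw f (\<sigma> (i # K')) n'"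
    by blast
next
  fix y assume a: "K \<in> words N (l-1)" "n \<in> L" and
    "\<exists>K' n'. K' \<in> words N (l - 1) \<and> n' \<in> L \<and> fw f K n = fw f K' n' \<and> y = fw f (\<sigma> (i # K')) n'"
  then obtain K' n' where "K' \<in> words N (l - 1)" "n' \<in> L" "fw f K n = fw f K' n'" "y = fw f (\<sigma> (i # K')) n'"
    by blast
  then show "y = fw f (\<sigma> (i # K)) n" using rep_uniq[OF a(1) _ a(2)] by auto
qed

lemma fs_bfs: "BFS N L fs"
proof -
  have inf: "infinite L" by (rule F.infL)
  have A: "\<forall>i\<in>{1..N}. inj_on (fs i) L \<and> fs i ` L \<subseteq> L"
  proof (intro ballI conjI)
    fix i assume i: "i \<in> {1..N}"
    show "inj_on (fs i) L"
    proof (rule inj_onI)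
      fix x y assume x: "x \<in> L" and y: "y \<in> L" and e: "fs i x = fs i y"
      obtain K n where K: "K \<in> words N (l-1)" "n \<in> L" "x = fw f K n" using rep[OF x] by blast
      obtain K' n' where K': "K' \<in> words N (l-1)" "n' \<in> L" "y = fw f K' n'" using rep[OF y] by blast
      have "fw f (\<sigma> (i # K)) n = fw f (\<sigma> (i # K')) n'" using e K K' fsig_eq by simp
      then have "\<sigma> (i # K) = \<sigma> (i # K') \<and> n = n'"
        using F.fw_uniq sig_in[OF i K(1)] sig_in[OF i K'(1)] K(2) K'(2) by (auto simp: words_iff)
      then have "K = K'" "n = n'" using bij cons_words[OF i K(1)] cons_words[OF i K'(1)]
        by (auto simp: bij_betw_def dest: inj_onD)
      then show "x = y" using K K' by simp
    qed
    show "fs i ` L \<subseteq> L"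
    proof
      fix y assume "y \<in> fs i ` L"
      then obtain x where x: "x \<in> L" "y = fs i x" by blast
      obtain K n where K: "K \<in> words N (l-1)" "n \<in> L" "x = fw f K n" using rep[OF x(1)] by blast
      show "y \<in> L" using x K fsig_eq F.fw_in sig_in[OF i K(1)] by (auto simp: words_iff)
    qed
  qed
  have B: "\<forall>i\<in>{1..N}. \<forall>j\<in>{1..N}. i \<noteq> j \<longrightarrow> fs i ` L \<inter> fs j ` L = {}"
  proof (intro ballI impI)
    fix i j assume i: "i \<in> {1..N}" and j: "j \<in> {1..N}" and ij: "i \<noteq> j"
    show "fs i ` L \<inter> fs j ` L = {}"
    proof (rule ccontr)
      assume "fs i ` L \<inter> fs j ` L \<noteq> {}"
      then obtain x y where x: "x \<in> L" and y: "y \<in> L" and e: "fs i x = fs j y" by blast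
      obtain K n where K: "K \<in> words N (l-1)" "n \<in> L" "x = fw f K n" using rep[OF x] by blast
      obtain K' n' where K': "K' \<in> words N (l-1)" "n' \<in> L" "y = fw f K' n'" using rep[OF y] by blast
      have "fw f (\<sigma> (i # K)) n = fw f (\<sigma> (j # K')) n'" using e K K' fsig_eq by simp
      then have "\<sigma> (i # K) = \<sigma> (j # K')"
        using F.fw_uniq sig_in[OF i K(1)] sig_in[OF j K'(1)] K(2) K'(2) by (auto simp: words_iff)
      then have "i # K = j # K'" using bij cons_words[OF i K(1)] cons_words[OF j K'(1)]
        by (auto simp: bij_betw_def dest: inj_onD)
      then show False using ij by simp
    qed
  qed
  have C: "(\<Union>i\<in>{1..N}. fs i ` L) = L"
  proof
    show "(\<Union>i\<in>{1..N}. fs i ` L) \<subseteq> L" using A by blast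
  next
    show "L \<subseteq> (\<Union>i\<in>{1..N}. fs i ` L)"
    proof
      fix x assume x: "x \<in> L"
      obtain W n where W: "length W = l" "set W \<subseteq> {1..N}" "n \<in> L" "x = fw f W n"
        using F.ancestors[OF x, of l] by blast
      have "W \<in> words N l" using W by (simp add: words_iff)
      then obtain V where V: "V \<in> words N l" "W = \<sigma> V" using bij by (metis bij_betw_imp_surj_on imageE)
      then obtain i K where iK: "V = i # K" using l2 by (cases V) (auto simp: words_iff)
      have i: "i \<in> {1..N}" and K: "K \<in> words N (l-1)" using V iK by (auto simp: words_iff)
      have "x = fs i (fw f K n)" using fsig_eq[OF K W(3)] W V iK by simp
      moreover have "fw f K n \<in> L" using F.fw_in K W(3) by (simp add: words_iff)
      ultimately show "x \<in> (\<Union>i\<in>{1..N}. fs i ` L)" using i by blast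
    qed
  qed
  show ?thesis unfolding BFS_def using inf A B C by blast
qed

sublocale S: bfsl N L fs by unfold_locales (rule fs_bfs)

end


context mainl begin

abbreviation "dl \<equiv> delta N l \<sigma>"
abbreviation "dw \<equiv> deltaw N l \<sigma>"

lemma dw_Cons: "dw K (i # w) = dw (dl K i) w" by (simp add: deltaw_def)
lemma dw_append: "dw K (u @ v) = dw (dw K u) v" by (simp add: deltaw_def)
lemma dw_Nil: "dw K [] = K" by (simp add: deltaw_def)

lemma snoc_words: "K \<in> words N (l-1) \<Longrightarrow> i \<in> {1..N} \<Longrightarrow> K @ [i] \<in> words N l"
  using l2 by (auto simp: words_iff)

lemma delta_prop:
  assumes K: "K \<in> words N (l-1)" and i: "i \<in> {1..N}"
  shows "\<exists>y1. y1 \<in> {1..N} \<and> dl K i \<in> words N (l-1) \<and> \<sigma> (y1 # dl K i) = K @ [i]"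
proof -
  have Ki: "K @ [i] \<in> \<sigma> ` words N l" using snoc_words[OF K i] bij by (simp add: bij_betw_def)
  let ?V = "inv_into (words N l) \<sigma> (K @ [i])"
  have V: "?V \<in> words N l" using inv_into_into[OF Ki] .
  have sV: "\<sigma> ?V = K @ [i]" using f_inv_into_f[OF Ki] .
  obtain y1 T where yT: "?V = y1 # T" using V l2 by (cases ?V) (auto simp: words_iff)
  have "dl K i = T" unfolding delta_def using yT by simp
  then show ?thesis using V yT sV by (intro exI[of _ y1]) (auto simp: words_iff)
qed

lemma delta_words: "K \<in> words N (l-1) \<Longrightarrow> i \<in> {1..N} \<Longrightarrow> dl K i \<in> words N (l-1)"
  using delta_prop by blast

lemma dw_words: "K \<in> words N (l-1) \<Longrightarrow> set w \<subseteq> {1..N} \<Longrightarrow> dw K w \<in> words N (l-1)"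
proof (induction w arbitrary: K)
  case Nil then show ?case by (simp add: dw_Nil)
next
  case (Cons i w)
  then show ?case using delta_words[OF Cons.prems(1)] by (simp add: dw_Cons)
qed

lemma delta_sig: "i \<in> {1..N} \<Longrightarrow> K \<in> words N (l-1) \<Longrightarrow> \<sigma> (i # K) = K2 @ [c] \<Longrightarrow> dl K2 c = K"
  unfolding delta_def using bij cons_words[of i K]
  by (metis bij_betw_def inv_into_f_f list.sel(3))

abbreviation "eqs \<equiv> equiv_bfs N L fs"

lemma lemM:
  assumes K: "K \<in> words N (l-1)" and i: "i \<in> {1..N}" and z: "z \<in> L"
  shows "eqs (fw f K (f i z)) (fw f (dl K i) z)"
proof -
  obtain y1 where y: "y1 \<in> {1..N}" "dl K i \<in> words N (l-1)" "\<sigma> (y1 # dl K i) = K @ [i]"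
    using delta_prop[OF K i] by blast
  have "fs y1 (fw f (dl K i) z) = fw f K (f i z)"
    using fsig_eq[OF y(2) z] y(3) by (simp add: fw_append)
  moreover have "fw f (dl K i) z \<in> L" using F.fw_in y(2) z by (simp add: words_iff)
  ultimately show ?thesis using S.eq_desc[of "fw f (dl K i) z" "[y1]"] y(1) by simp
qed

lemma lemMs:
  assumes "K \<in> words N (l-1)" "set w \<subseteq> {1..N}" "z \<in> L"
  shows "eqs (fw f K (fw f w z)) (fw f (dw K w) z)"
  using assms
proof (induction w arbitrary: K)
  case Nil then show ?case using S.eq_refl F.fw_in by (simp add: dw_Nil words_iff)
next
  case (Cons i w)
  have i: "i \<in> {1..N}" and w: "set w \<subseteq> {1..N}" using Cons by auto
  have "eqs (fw f K (f i (fw f w z))) (fw f (dl K i) (fw f w z))"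
    using lemM[OF Cons.prems(1) i F.fw_in[OF w Cons.prems(3)]] .
  moreover have "eqs (fw f (dl K i) (fw f w z)) (fw f (dw (dl K i) w) z)"
    using Cons.IH[OF delta_words[OF Cons.prems(1) i] w Cons.prems(3)] .
  ultimately show ?case using S.eq_trans by (simp add: dw_Cons)
qed

lemma lemA:
  assumes "set U \<subseteq> {1..N}" "K \<in> words N (l-1)" "z \<in> L"
  shows "\<exists>K' u. K' \<in> words N (l-1) \<and> set u \<subseteq> {1..N} \<and> length u = length U \<and> dw K' u = K
     \<and> fw fs U (fw f K z) = fw f K' (fw f u z)"
  using assms
proof (induction U)
  case Nil then show ?case by (intro exI[of _ K] exI[of _ "[]"]) (simp add: dw_Nil)
next
  case (Cons i U)
  then obtain K1 u1 where h: "K1 \<in> words N (l-1)" "set u1 \<subseteq> {1..N}" "length u1 = length U"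
    "dw K1 u1 = K" "fw fs U (fw f K z) = fw f K1 (fw f u1 z)" by auto
  have i: "i \<in> {1..N}" using Cons by auto
  have u1z: "fw f u1 z \<in> L" using F.fw_in h(2) Cons.prems(3) by blast
  have sw: "\<sigma> (i # K1) \<in> words N l" using sig_in[OF i h(1)] .
  obtain K2 c where Kc: "\<sigma> (i # K1) = K2 @ [c]"
    using sw l2 by (metis words_iff append_butlast_last_id length_0_conv not_numeral_le_zero le_zero_eq)
  have K2: "K2 \<in> words N (l-1)" and c: "c \<in> {1..N}" using sw Kc by (auto simp: words_iff)
  have "fw fs (i # U) (fw f K z) = fw f (\<sigma> (i # K1)) (fw f u1 z)"
    using h(5) fsig_eq[OF h(1) u1z] by simp
  also have "\<dots> = fw f K2 (fw f (c # u1) z)" using Kc by (simp add: fw_append)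
  finally have e: "fw fs (i # U) (fw f K z) = fw f K2 (fw f (c # u1) z)" .
  have "dw K2 (c # u1) = K" using delta_sig[OF i h(1) Kc] h(4) by (simp add: dw_Cons)
  then show ?case using K2 c h e by (intro exI[of _ K2] exI[of _ "c # u1"]) auto
qed

end


context mainl begin

abbreviation "k \<equiv> length J"

lemma kpos: "k > 0" using Jne by simp

lemma fw_JJ: "fw f J c = c \<Longrightarrow> fw f (JJ J n) c = c"
  by (induction n) (auto simp: JJ_Suc fw_append)

lemma JJN: "set (JJ J n) \<subseteq> {1..N}" using JJ_set[OF JN] .

lemma exist_fix: "\<exists>c\<in>L. fw f J c = c"
proof -
  obtain n :: "nat \<Rightarrow> 'a" where n: "n ` {1..k} \<subseteq> L" "f (J ! 0) (n 1) = n k"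
    "\<forall>i\<in>{2..k}. f (J ! (i - 1)) (n i) = n (i - 1)"
    using isp unfolding isP_def by blast
  have step: "1 \<le> s \<Longrightarrow> s \<le> k \<Longrightarrow> fw f (take s J) (n s) = n k" for s
  proof (induction s)
    case 0 then show ?case by simp
  next
    case (Suc s)
    show ?case
    proof (cases "s = 0")
      case True
      then show ?thesis using n(2) kpos by (simp add: take_Suc_conv_app_nth)
    next
      case False
      have sk: "s < k" using Suc by simp
      have "take (Suc s) J = take s J @ [J ! s]" using sk by (simp add: take_Suc_conv_app_nth)
      moreover have "f (J ! s) (n (Suc s)) = n s" using n(3)[rule_format, of "Suc s"] Suc False by simp
      ultimately show ?thesis using Suc False by (simp add: fw_append)
    qed
  qed
  have "fw f J (n k) = n k" using step[of k] kpos by simp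
  moreover have "n k \<in> L" using n(1) kpos by (simp add: image_subset_iff Suc_leI)
  ultimately show ?thesis by blast
qed

lemma Anc:
  assumes c: "c \<in> L" "fw f J c = c" and u: "set u \<subseteq> {1..N}" and y: "y \<in> L" and e: "fw f u y = c"
  shows "y = fw f (drop (length u mod k) J) c"
proof -
  let ?a = "length u div k"
  have len: "length u = ?a * k + length u mod k" by simp
  have "fw f (JJ J (Suc ?a)) c = c" by (rule fw_JJ[OF c(2)])
  then have "fw f u y = fw f (JJ J (Suc ?a)) c" using e by simp
  moreover have "length u \<le> length (JJ J (Suc ?a))" unfolding JJ_len
    using kpos by (metis len add_le_mono le_refl mod_less_divisor mult_Suc less_imp_le add.commute)
  ultimately have "y = fw f (drop (length u) (JJ J (Suc ?a))) c"
    using F.fw_prefix[OF u JJN _ y c(1)] by blast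
  moreover have "drop (length u) (JJ J (Suc ?a)) = drop (length u mod k) J"
    unfolding JJ_Suc using len JJ_len[of ?a J] by (metis drop_append add_diff_cancel_left' drop_all le_add1 self_append_conv2)
  ultimately show ?thesis by simp
qed

lemma Rot:
  assumes c: "c \<in> L" "fw f J c = c" and y: "y \<in> L" "fw f J y = y"
    and s: "0 < s" "s < k" and e: "y = fw f (drop s J) c"
  shows False
proof -
  have tJ: "set (take s J) \<subseteq> {1..N}" and dJ: "set (drop s J) \<subseteq> {1..N}"
    using JN by (meson order_trans set_take_subset set_drop_subset)+
  have "fw f (take s J) y = fw f (take s J @ drop s J) c" using e by (metis fw_append_app)
  then have ty: "fw f (take s J) y = c" using c(2) by simp
  have "fw f (drop s J @ take s J) y = y" using ty e by (simp add: fw_append)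
  then have "fw f (drop s J @ take s J) y = fw f J y" using y(2) by simp
  then have "drop s J @ take s J = J" using F.fw_uniq[of "drop s J @ take s J" J y y] dJ tJ JN y(1) by auto
  then have comm: "drop s J @ take s J = take s J @ drop s J" by simp
  obtain m n zs where mn: "concat (replicate m zs) = take s J" "concat (replicate n zs) = drop s J"
    using comm_append_are_replicate[OF comm[symmetric]] by blast
  have ne: "take s J \<noteq> []" "drop s J \<noteq> []" using s by auto
  have "m \<noteq> 0" using mn(1) ne(1) by (metis concat.simps(1) replicate_0)
  moreover have "n \<noteq> 0" using mn(2) ne(2) by (metis concat.simps(1) replicate_0)
  ultimately have "m \<noteq> 0" "n \<noteq> 0" by auto
  then have "m \<ge> 1" "n \<ge> 1" by auto
  moreover have "J = concat (replicate (m + n) zs)" using mn by (simp add: replicate_add)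
  ultimately show False using np unfolding nonperiodic_def by (metis add_mono one_add_one)
qed

lemma fix_uniq:
  assumes c: "c \<in> L" "fw f J c = c" and y: "y \<in> L" "fw f J y = y"
  shows "y = c"
proof -
  obtain x0 where x0: "x0 \<in> L" "L = Aset N L f x0" using isp unfolding isP_def cyclic_def by blast
  have "equiv_bfs N L f x0 y" "equiv_bfs N L f x0 c" using x0 c y unfolding Aset_def by blast+
  then have "equiv_bfs N L f y c" using F.eq_sym F.eq_trans by blast
  then obtain z U V where z: "z \<in> L" "set U \<subseteq> {1..N}" "set V \<subseteq> {1..N}" "fw f U z = y" "fw f V z = c"
    unfolding equiv_bfs_def by blast
  let ?d = "drop (length V mod k) J"
  have dJ: "set ?d \<subseteq> {1..N}" using JN by (meson order_trans set_drop_subset)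
  have "z = fw f ?d c" using Anc[OF c z(3) z(1) z(5)] .
  then have yw: "fw f (U @ ?d) c = y" using z(4) by (simp add: fw_append)
  have w: "set (U @ ?d) \<subseteq> {1..N}" using z(2) dJ by simp
  let ?s = "length (U @ ?d) mod k"
  have cy: "c = fw f (drop ?s J) y" using Anc[OF y w c(1) yw] .
  have "?s < k" using kpos by simp
  show ?thesis
  proof (cases "?s = 0")
    case True
    then show ?thesis using cy y(2) by simp
  next
    case False
    then show ?thesis using Rot[OF y c _ _ cy] \<open>?s < k\<close> by blast
  qed
qed

definition n0 where "n0 = (THE n. n \<in> L \<and> fw f J n = n)"

lemma n0: "n0 \<in> L" "fw f J n0 = n0"
proof -
  obtain c where c: "c \<in> L" "fw f J c = c" using exist_fix by blast
  have "n0 = c" unfolding n0_def using c fix_uniq[OF c] by blast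
  then show "n0 \<in> L" "fw f J n0 = n0" using c by auto
qed

lemma lemC:
  assumes u: "set u \<subseteq> {1..N}" and e: "fw f u n0 = n0"
  shows "\<exists>b. u = JJ J b"
proof -
  let ?s = "length u mod k"
  have a: "n0 = fw f (drop ?s J) n0" using Anc[OF n0 u n0(1) e] .
  have "?s = 0"
  proof (rule ccontr)
    assume "?s \<noteq> 0"
    then show False using Rot[OF n0 n0, of ?s] a kpos by simp
  qed
  then have len: "length u = (length u div k) * k" by (metis mult_div_mod_eq add_0_right mult.commute)
  have "fw f u n0 = fw f (JJ J (length u div k)) n0" using e fw_JJ[OF n0(2)] by simp
  then have "u = JJ J (length u div k)" using F.fw_uniq[OF u JJN _ n0(1) n0(1)] len JJ_len by metis
  then show ?thesis by blast
qed

lemma all_from_n0: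
  assumes x: "x \<in> L"
  shows "\<exists>w. set w \<subseteq> {1..N} \<and> x = fw f w n0"
proof -
  obtain x0 where x0: "x0 \<in> L" "L = Aset N L f x0" using isp unfolding isP_def cyclic_def by blast
  have "equiv_bfs N L f x0 x" "equiv_bfs N L f x0 n0" using x0 x n0 unfolding Aset_def by blast+
  then have "equiv_bfs N L f x n0" using F.eq_sym F.eq_trans by blast
  then obtain z U V where z: "z \<in> L" "set U \<subseteq> {1..N}" "set V \<subseteq> {1..N}" "fw f U z = x" "fw f V z = n0"
    unfolding equiv_bfs_def by blast
  let ?d = "drop (length V mod k) J"
  have dJ: "set ?d \<subseteq> {1..N}" using JN by (meson order_trans set_drop_subset)
  have "z = fw f ?d n0" using Anc[OF n0 z(3) z(1) z(5)] .
  then show ?thesis using z(2,4) dJ by (intro exI[of _ "U @ ?d"]) (auto simp: fw_append)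
qed

end


lemma funpow_mult_fix: "(G ^^ s) q = q \<Longrightarrow> (G ^^ (m * s)) q = q"
  by (induction m) (auto simp: funpow_add)

lemma funpow_mod_fix: assumes "(G ^^ s) q = q" shows "(G ^^ n) q = (G ^^ (n mod s)) q"
proof -
  have "n = n mod s + (n div s) * s" by simp
  then have "(G ^^ n) q = (G ^^ (n mod s)) ((G ^^ ((n div s) * s)) q)" by (metis funpow_add comp_apply)
  then show ?thesis using funpow_mult_fix[OF assms] by simp
qed

lemma period_card:
  fixes G :: "'b \<Rightarrow> 'b"
  assumes s: "s \<ge> 1" "(G ^^ s) q = q"
  shows "card {(G ^^ n) q | n. n \<ge> 1} \<ge> 1 \<and> (G ^^ card {(G ^^ n) q | n. n \<ge> 1}) q = q"
proof -
  define s0 where "s0 = (LEAST s. s \<ge> 1 \<and> (G ^^ s) q = q)"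
  have s0: "s0 \<ge> 1" "(G ^^ s0) q = q" using LeastI[of "\<lambda>s. s \<ge> 1 \<and> (G ^^ s) q = q" s] s
    unfolding s0_def by auto
  have min: "t \<ge> 1 \<Longrightarrow> t < s0 \<Longrightarrow> (G ^^ t) q \<noteq> q" for t
    using not_less_Least[of t "\<lambda>s. s \<ge> 1 \<and> (G ^^ s) q = q"] unfolding s0_def by auto
  have eqset: "{(G ^^ n) q | n. n \<ge> 1} = (\<lambda>n. (G ^^ n) q) ` {1..s0}"
  proof
    show "{(G ^^ n) q | n. n \<ge> 1} \<subseteq> (\<lambda>n. (G ^^ n) q) ` {1..s0}"
    proof
      fix x assume "x \<in> {(G ^^ n) q | n. n \<ge> 1}"
      then obtain n where n: "x = (G ^^ n) q" by blast
      have x: "x = (G ^^ (n mod s0)) q" using n funpow_mod_fix[OF s0(2)] by simp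
      show "x \<in> (\<lambda>n. (G ^^ n) q) ` {1..s0}"
      proof (cases "n mod s0 = 0")
        case True then show ?thesis using x s0 by (intro image_eqI[of _ _ s0]) auto
      next
        case False
        have "n mod s0 < s0" using s0 by simp
        then show ?thesis using x False by (intro image_eqI[of _ _ "n mod s0"]) auto
      qed
    qed
  next
    show "(\<lambda>n. (G ^^ n) q) ` {1..s0} \<subseteq> {(G ^^ n) q | n. n \<ge> 1}" by auto
  qed
  have inj: "inj_on (\<lambda>n. (G ^^ n) q) {1..s0}"
  proof (rule inj_onI, rule ccontr)
    have key: "a \<in> {1..s0} \<Longrightarrow> b \<in> {1..s0} \<Longrightarrow> a < b \<Longrightarrow> (G ^^ a) q = (G ^^ b) q \<Longrightarrow> False" for a b
    proof -
      assume a: "a \<in> {1..s0}" and b: "b \<in> {1..s0}" and ab: "a < b" and e: "(G ^^ a) q = (G ^^ b) q"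
      have "(G ^^ (s0 - b + a)) q = (G ^^ (s0 - b)) ((G ^^ a) q)" by (simp add: funpow_add)
      also have "\<dots> = (G ^^ (s0 - b)) ((G ^^ b) q)" using e by simp
      also have "\<dots> = (G ^^ (s0 - b + b)) q" by (simp add: funpow_add)
      also have "\<dots> = q" using b s0 by simp
      finally have "(G ^^ (s0 - b + a)) q = q" .
      moreover have "1 \<le> s0 - b + a" "s0 - b + a < s0" using a b ab by auto
      ultimately show False using min by blast
    qed
    fix a b assume "a \<in> {1..s0}" "b \<in> {1..s0}" "(G ^^ a) q = (G ^^ b) q" "a \<noteq> b"
    then show False using key by (metis linorder_neqE_nat)
  qed
  have "card {(G ^^ n) q | n. n \<ge> 1} = s0" unfolding eqset using card_image[OF inj] by simp
  then show ?thesis using s0 by simp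
qed

context mainl begin

abbreviation "G \<equiv> (\<lambda>q. dw q J)"

lemma dw_JJ: "dw q (JJ J n) = (G ^^ n) q"
proof (induction n)
  case 0 then show ?case by (simp add: dw_Nil)
next
  case (Suc n)
  have "dw q (JJ J (Suc n)) = G (dw q (JJ J n))" by (simp only: JJ_Suc dw_append)
  then show ?case using Suc by simp
qed

lemma G_words: assumes "q \<in> words N (l-1)" shows "(G ^^ n) q \<in> words N (l-1)"
proof (induction n)
  case 0 then show ?case using assms by simp
next
  case (Suc n) then show ?case using dw_words[OF Suc.IH JN] by simp
qed

lemma qclass_eq: "qclass N l \<sigma> J q = {(G ^^ n) q | n. n \<ge> 1}"
  unfolding qclass_def by (auto simp: dw_JJ)

lemma QJ_eq: "QJ N l \<sigma> J = {q \<in> words N (l-1). \<exists>n\<ge>1. (G ^^ n) q = q}"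
  unfolding QJ_def by (simp add: dw_JJ)

abbreviation "Js m \<equiv> map (\<lambda>i. J ! (i mod k)) [0..<m]"

lemma pseq_eq: "pseq N l \<sigma> J p (Suc m) = dw p (Js m)"
  by (induction m) (auto simp: dw_append dw_Cons dw_Nil)

lemma Js_JJ: "Js (r * k) = JJ J r"
proof (induction r)
  case 0 then show ?case by simp
next
  case (Suc r)
  have "[0..<Suc r * k] = [0..<r * k] @ [r * k..<r * k + k]"
    using upt_add_eq_append[of 0 "r * k" k] by (simp add: add.commute)
  moreover have "map (\<lambda>i. J ! (i mod k)) [r * k..<r * k + k] = J"
  proof (rule nth_equalityI)
    show "length (map (\<lambda>i. J ! (i mod k)) [r * k..<r * k + k]) = length J" by simp
  next
    fix i assume "i < length (map (\<lambda>i. J ! (i mod k)) [r * k..<r * k + k])"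
    then have i: "i < k" by simp
    then have "[r * k..<r * k + k] ! i = r * k + i" by simp
    moreover have "(r * k + i) mod k = i" using i by simp
    ultimately show "map (\<lambda>i. J ! (i mod k)) [r * k..<r * k + k] ! i = J ! i" using i by simp
  qed
  ultimately show ?case unfolding JJ_Suc using Suc by simp
qed

lemma mpt_prop:
  assumes p: "p \<in> QJ N l \<sigma> J"
  shows "mpt N L f l \<sigma> J p \<in> L \<and> eqs (mpt N L f l \<sigma> J p) (fw f p n0)"
proof -
  have pw: "p \<in> words N (l-1)" and "\<exists>n\<ge>1. (G ^^ n) p = p" using p QJ_eq by auto
  then obtain s where s: "s \<ge> 1" "(G ^^ s) p = p" by blast
  let ?r = "card (qclass N l \<sigma> J p)"
  have r: "?r \<ge> 1" "(G ^^ ?r) p = p" using period_card[OF s] qclass_eq by auto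
  let ?a = "?r * k"
  have a1: "?a \<ge> 1" using r kpos by (simp add: Suc_le_eq)
  have a0: "0 < ?a" using less_le_trans[OF zero_less_one a1] .
  have a: "Suc (?a - 1) = ?a" by (subst One_nat_def) (rule Suc_pred[OF a0])
  have n0eq: "(THE n. n \<in> L \<and> fw f J n = n) = n0" by (simp add: n0_def)
  let ?pa = "dw p (Js (?a - 1))"
  let ?j = "J ! ((?a - 1) mod k)"
  have ps: "pseq N l \<sigma> J p ?a = ?pa"
    using pseq_eq[of p "?a - 1"] by (simp only: a)
  have m: "mpt N L f l \<sigma> J p = fw f ?pa (f ?j n0)"
    unfolding mpt_def Let_def n0eq Jext_def ps by (simp add: fw_append)
  have j: "?j \<in> {1..N}" using JN kpos by (meson nth_mem mod_less_divisor subsetD)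
  have Jsw: "set (Js m) \<subseteq> {1..N}" for m using JN kpos by auto
  have paw: "?pa \<in> words N (l-1)" using dw_words[OF pw Jsw] .
  have "eqs (mpt N L f l \<sigma> J p) (fw f (dl ?pa ?j) n0)" using m lemM[OF paw j n0(1)] by simp
  moreover have "dl ?pa ?j = dw p (Js ?a)"
  proof -
    have "dw p (Js (Suc (?a - 1))) = dl ?pa ?j" by (simp add: dw_append dw_Cons dw_Nil)
    then show ?thesis by (simp only: a)
  qed
  moreover have "dw p (Js ?a) = p" using Js_JJ dw_JJ r by simp
  moreover have "mpt N L f l \<sigma> J p \<in> L" using m F.fw_in paw j F.maps n0(1) by (simp add: words_iff)
  ultimately show ?thesis by simp
qed

end


context mainl begin

lemma words_finite: "finite (words N n)"
proof -
  have "words N n = {xs. set xs \<subseteq> {1..N} \<and> length xs = n}" unfolding words_def by (simp add: conj_commute)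
  then show ?thesis using finite_lists_length_eq[of "{1..N}" n] by simp
qed

lemma eventually_periodic:
  assumes q: "q \<in> words N (l-1)"
  shows "\<exists>a b. a < b \<and> (G ^^ a) q = (G ^^ b) q"
proof -
  have "\<not> inj (\<lambda>n. (G ^^ n) q)"
  proof
    assume inj: "inj (\<lambda>n. (G ^^ n) q)"
    have "range (\<lambda>n. (G ^^ n) q) \<subseteq> words N (l-1)" using G_words[OF q] by auto
    then have "finite (range (\<lambda>n. (G ^^ n) q))" using words_finite finite_subset by blast
    then have "finite (UNIV :: nat set)" using finite_imageD inj by blast
    then show False by simp
  qed
  then obtain a b where ab: "a \<noteq> b" "(G ^^ a) q = (G ^^ b) q" unfolding inj_def by blast
  show ?thesis
  proof (cases "a < b")
    case True then show ?thesis using ab by blast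
  next
    case False then have "b < a" using ab by simp
    then show ?thesis using ab by metis
  qed
qed

lemma eq_shift:
  assumes q: "q \<in> words N (l-1)"
  shows "eqs (fw f q n0) (fw f ((G ^^ a) q) n0)"
proof -
  have "fw f q n0 = fw f q (fw f (JJ J a) n0)" using fw_JJ[OF n0(2)] by simp
  moreover have "eqs (fw f q (fw f (JJ J a) n0)) (fw f (dw q (JJ J a)) n0)"
    using lemMs[OF q JJN n0(1)] .
  ultimately show ?thesis using dw_JJ by simp
qed

lemma main:
  fixes M :: nat and p :: "nat \<Rightarrow> nat list"
  assumes pQ: "\<forall>i\<in>{1..M}. p i \<in> QJ N l \<sigma> J"
    and pd: "\<forall>i\<in>{1..M}. \<forall>j\<in>{1..M}. i \<noteq> j \<longrightarrow> qclass N l \<sigma> J (p i) \<inter> qclass N l \<sigma> J (p j) = {}"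
    and pU: "QJ N l \<sigma> J = (\<Union>i\<in>{1..M}. qclass N l \<sigma> J (p i))"
  shows "L = (\<Union>i\<in>{1..M}. Lam N L f l \<sigma> J (p i))
    \<and> (\<forall>i\<in>{1..M}. \<forall>j\<in>{1..M}. i \<noteq> j \<longrightarrow> Lam N L f l \<sigma> J (p i) \<inter> Lam N L f l \<sigma> J (p j) = {})
    \<and> direct_sum N L (fsig N L f l \<sigma>) {1..M} (\<lambda>i. Lam N L f l \<sigma> J (p i))"
proof -
  have Lam: "Lam N L f l \<sigma> J q = Aset N L fs (mpt N L f l \<sigma> J q)" for q by (simp add: Lam_def)
  have pw: "i \<in> {1..M} \<Longrightarrow> p i \<in> words N (l-1)" for i using pQ QJ_def by auto
  have cov: "\<exists>i\<in>{1..M}. x \<in> Lam N L f l \<sigma> J (p i)" if x: "x \<in> L" for x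
  proof -
    obtain w where w: "set w \<subseteq> {1..N}" "x = fw f w n0" using all_from_n0[OF x] by blast
    let ?w = "w @ JJ J l"
    have xw: "x = fw f ?w n0" using w fw_JJ[OF n0(2)] by (simp add: fw_append)
    have k1: "1 \<le> k" using kpos by linarith
    have lk: "l \<le> l * k" using mult_le_mono2[OF k1, of l] by simp
    have "length ?w = length w + l * k" using JJ_len[of l J] by simp
    then have lw: "length ?w \<ge> l - 1" using lk by linarith
    have sw: "set ?w \<subseteq> {1..N}" using w JJN by simp
    let ?K = "take (l-1) ?w" and ?v = "drop (l-1) ?w"
    have "set ?K \<subseteq> {1..N}" using sw by (meson order_trans set_take_subset)
    then have K: "?K \<in> words N (l-1)" using lw by (simp add: words_iff)
    have v: "set ?v \<subseteq> {1..N}" using sw by (meson order_trans set_drop_subset)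
    have xKv: "x = fw f ?K (fw f ?v n0)" using xw by (metis fw_append_app append_take_drop_id)
    let ?q0 = "dw ?K ?v"
    have e1: "eqs x (fw f ?q0 n0)" using lemMs[OF K v n0(1)] xKv by simp
    have q0: "?q0 \<in> words N (l-1)" using dw_words[OF K v] .
    obtain a b where ab: "a < b" "(G ^^ a) ?q0 = (G ^^ b) ?q0" using eventually_periodic[OF q0] by blast
    let ?q' = "(G ^^ a) ?q0"
    have "(G ^^ (b - a)) ?q' = (G ^^ (b - a + a)) ?q0" by (simp add: funpow_add)
    then have per: "(G ^^ (b - a)) ?q' = ?q'" using ab by simp
    have q'Q: "?q' \<in> QJ N l \<sigma> J" unfolding QJ_eq using G_words[OF q0] per ab(1)
      by (intro CollectI conjI exI[of _ "b - a"]) auto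
    have e2: "eqs (fw f ?q0 n0) (fw f ?q' n0)" using eq_shift[OF q0] .
    obtain i where i: "i \<in> {1..M}" "?q' \<in> qclass N l \<sigma> J (p i)" using pU q'Q by blast
    obtain n where n: "?q' = (G ^^ n) (p i)" using i(2) qclass_eq by blast
    have e3: "eqs (fw f (p i) n0) (fw f ?q' n0)" using eq_shift[OF pw[OF i(1)], of n] n by simp
    have e4: "eqs (mpt N L f l \<sigma> J (p i)) (fw f (p i) n0)" using mpt_prop pQ i(1) by blast
    have "eqs (mpt N L f l \<sigma> J (p i)) x"
      using S.eq_trans[OF S.eq_trans[OF S.eq_trans[OF e4 e3] S.eq_sym[OF e2]] S.eq_sym[OF e1]] .
    then show ?thesis using i(1) x unfolding Lam Aset_def by blast
  qed
  have dis: "Lam N L f l \<sigma> J (p i) \<inter> Lam N L f l \<sigma> J (p j) = {}"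
    if i: "i \<in> {1..M}" and j: "j \<in> {1..M}" and ij: "i \<noteq> j" for i j
  proof (rule ccontr)
    assume "Lam N L f l \<sigma> J (p i) \<inter> Lam N L f l \<sigma> J (p j) \<noteq> {}"
    then obtain y where "eqs (mpt N L f l \<sigma> J (p i)) y" "eqs (mpt N L f l \<sigma> J (p j)) y"
      unfolding Lam Aset_def by blast
    moreover have "eqs (mpt N L f l \<sigma> J (p i)) (fw f (p i) n0)" "eqs (mpt N L f l \<sigma> J (p j)) (fw f (p j) n0)"
      using mpt_prop pQ i j by blast+
    ultimately have "eqs (fw f (p i) n0) (fw f (p j) n0)" using S.eq_trans S.eq_sym by metis
    then obtain z0 U1 U2 where z: "z0 \<in> L" "set U1 \<subseteq> {1..N}" "set U2 \<subseteq> {1..N}"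
      "fw fs U1 z0 = fw f (p i) n0" "fw fs U2 z0 = fw f (p j) n0"
      unfolding equiv_bfs_def by blast
    obtain K0 w0 where K0: "K0 \<in> words N (l-1)" "w0 \<in> L" "z0 = fw f K0 w0" using rep[OF z(1)] by blast
    obtain K1 u1 where h1: "K1 \<in> words N (l-1)" "set u1 \<subseteq> {1..N}" "dw K1 u1 = K0"
      "fw fs U1 (fw f K0 w0) = fw f K1 (fw f u1 w0)" using lemA[OF z(2) K0(1,2)] by blast
    obtain K2 u2 where h2: "K2 \<in> words N (l-1)" "set u2 \<subseteq> {1..N}" "dw K2 u2 = K0"
      "fw fs U2 (fw f K0 w0) = fw f K2 (fw f u2 w0)" using lemA[OF z(3) K0(1,2)] by blast
    have u1L: "fw f u1 w0 \<in> L" and u2L: "fw f u2 w0 \<in> L" using F.fw_in h1(2) h2(2) K0(2) by auto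
    have r1: "K1 = p i \<and> fw f u1 w0 = n0" using rep_uniq[OF h1(1) pw[OF i] u1L n0(1)] h1(4) z(4) K0(3) by simp
    have r2: "K2 = p j \<and> fw f u2 w0 = n0" using rep_uniq[OF h2(1) pw[OF j] u2L n0(1)] h2(4) z(5) K0(3) by simp
    let ?d = "drop (length u1 mod k) J"
    have w0: "w0 = fw f ?d n0" using Anc[OF n0 h1(2) K0(2)] r1 by simp
    have "length u1 mod k < k" using kpos by (rule mod_less_divisor)
    then have dne: "?d \<noteq> []" by simp
    have dN: "set ?d \<subseteq> {1..N}" using JN by (meson order_trans set_drop_subset)
    have "fw f (u1 @ ?d) n0 = n0" using w0 r1 by (simp add: fw_append)
    then obtain a where a: "u1 @ ?d = JJ J a" using lemC h1(2) dN by (metis Un_subset_iff set_append)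
    have "fw f (u2 @ ?d) n0 = n0" using w0 r2 by (simp add: fw_append)
    then obtain b where b: "u2 @ ?d = JJ J b" using lemC h2(2) dN by (metis Un_subset_iff set_append)
    have a0: "a \<noteq> 0"
    proof
      assume "a = 0"
      then have "u1 @ ?d = []" using a by (simp only: replicate_0 concat.simps(1))
      then show False using dne append_is_Nil_conv by blast
    qed
    have b0: "b \<noteq> 0"
    proof
      assume "b = 0"
      then have "u2 @ ?d = []" using b by (simp only: replicate_0 concat.simps(1))
      then show False using dne append_is_Nil_conv by blast
    qed
    have "(G ^^ a) (p i) = dw (p i) (u1 @ ?d)" using a dw_JJ by simp
    also have "\<dots> = dw K0 ?d" using h1(3) r1 by (simp add: dw_append)
    also have "\<dots> = dw (p j) (u2 @ ?d)" using h2(3) r2 by (simp add: dw_append)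
    also have "\<dots> = (G ^^ b) (p j)" using b dw_JJ by simp
    finally have "(G ^^ a) (p i) = (G ^^ b) (p j)" .
    then have "(G ^^ a) (p i) \<in> qclass N l \<sigma> J (p i) \<inter> qclass N l \<sigma> J (p j)"
      unfolding qclass_eq using a0 b0 by (metis (mono_tags, lifting) IntI mem_Collect_eq less_one not_le)
    then show False using pd i j ij by blast
  qed
  have LU: "L = (\<Union>i\<in>{1..M}. Lam N L f l \<sigma> J (p i))"
    using cov S.Aset_sub unfolding Lam by blast
  have inv: "\<forall>\<omega>\<in>{1..M}. \<forall>i\<in>{1..N}. fs i ` Lam N L f l \<sigma> J (p \<omega>) \<subseteq> Lam N L f l \<sigma> J (p \<omega>)"
    unfolding Lam using S.Aset_inv by blast
  have bf: "\<forall>\<omega>\<in>{1..M}. BFS N (Lam N L f l \<sigma> J (p \<omega>)) fs"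
    unfolding Lam using S.Aset_BFS[OF N2] mpt_prop pQ by blast
  show ?thesis using LU dis inv bf unfolding direct_sum_def by blast
qed

end

theorem lemma3p1:
  fixes N l M :: nat and \<sigma> :: "nat list \<Rightarrow> nat list" and J :: "nat list"
    and L :: "'a set" and f :: "nat \<Rightarrow> 'a \<Rightarrow> 'a" and p :: "nat \<Rightarrow> nat list"
  assumes "N \<ge> 2" and "l \<ge> 2"
    and "perm_words N l \<sigma>"
    and "J \<noteq> []" and "set J \<subseteq> {1..N}" and "nonperiodic J"
    and "BFS N L f" and "isP N L f J"
    and "\<forall>i\<in>{1..M}. p i \<in> QJ N l \<sigma> J"
    and "\<forall>i\<in>{1..M}. \<forall>j\<in>{1..M}. i \<noteq> j \<longrightarrow> qclass N l \<sigma> J (p i) \<inter> qclass N l \<sigma> J (p j) = {}"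
    and "QJ N l \<sigma> J = (\<Union>i\<in>{1..M}. qclass N l \<sigma> J (p i))"
  shows "L = (\<Union>i\<in>{1..M}. Lam N L f l \<sigma> J (p i))
    \<and> (\<forall>i\<in>{1..M}. \<forall>j\<in>{1..M}. i \<noteq> j \<longrightarrow> Lam N L f l \<sigma> J (p i) \<inter> Lam N L f l \<sigma> J (p j) = {})
    \<and> direct_sum N L (fsig N L f l \<sigma>) {1..M} (\<lambda>i. Lam N L f l \<sigma> J (p i))"
proof -
  interpret mainl N l \<sigma> J L f using assms(1-8) by unfold_locales
  show ?thesis using main[OF assms(9-11)] .
qed


end
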